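(* Let $E$ be a second countable Stone space with at least four points. Then $E$ admits a pants decomposition.
   Context: A Stone space is a compact, Hausdorff, totally disconnected space. A cut of $E$ is an unordered partition of $E$ into two disjoint clopen sets $U,V$, written $U\sqcup V$; it is non-peripheral if each of $U,V$ contains at least two points. Two cuts $U\sqcup V$, $U'\sqcup V'$ cross if all four sets $U\cap U'$, $U\cap V'$, $V\cap U'$, $V\cap V'$ are nonempty; otherwise they are compatible. A pants decomposition of $E$ is a countable (finite or countably infinite) collection $\Gamma=\{\gamma_n\}$ of non-peripheral cuts such that: (1) any two cuts in $\Gamma$ are compatible; (2) every non-peripheral cut $\gamma\notin\Gamma$ crosses some cut of $\Gamma$; (3) for every non-peripheral cut $\gamma\notin\Gamma$, the set of $\gamma_j\in\Gamma$ crossing $\gamma$ is finite. *)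

theory Defs
  imports "HOL-Analysis.Analysis"
begin

definition totally_disconnected_space :: "'a topology \<Rightarrow> bool" where
  "totally_disconnected_space X \<longleftrightarrow>
     (\<forall>S. connectedin X S \<longrightarrow> (\<forall>x\<in>S. \<forall>y\<in>S. x = y))"

definition stone_space :: "'a topology \<Rightarrow> bool" where
  "stone_space X \<longleftrightarrow> compact_space X \<and> Hausdorff_space X \<and> totally_disconnected_space X"

definition is_cut :: "'a topology \<Rightarrow> 'a set set \<Rightarrow> bool" where
  "is_cut X c \<longleftrightarrow> (\<exists>U V. c = {U, V} \<and> closedin X U \<and> openin X U \<and> closedin X V \<and> openin X V
      \<and> U \<inter> V = {} \<and> U \<union> V = topspace X \<and> U \<noteq> {} \<and> V \<noteq> {})"

definition non_peripheral_cut :: "'a topology \<Rightarrow> 'a set set \<Rightarrow> bool" where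
  "non_peripheral_cut X c \<longleftrightarrow> is_cut X c \<and> (\<forall>U\<in>c. \<exists>x\<in>U. \<exists>y\<in>U. x \<noteq> y)"

definition cuts_cross :: "'a set set \<Rightarrow> 'a set set \<Rightarrow> bool" where
  "cuts_cross c d \<longleftrightarrow> (\<forall>U\<in>c. \<forall>U'\<in>d. U \<inter> U' \<noteq> {})"

definition cuts_compatible :: "'a set set \<Rightarrow> 'a set set \<Rightarrow> bool" where
  "cuts_compatible c d \<longleftrightarrow> \<not> cuts_cross c d"

definition pants_decomposition :: "'a topology \<Rightarrow> 'a set set set \<Rightarrow> bool" where
  "pants_decomposition X \<Gamma> \<longleftrightarrow>
     countable \<Gamma> \<and> (\<forall>c\<in>\<Gamma>. non_peripheral_cut X c) \<and>
     (\<forall>c\<in>\<Gamma>. \<forall>d\<in>\<Gamma>. cuts_compatible c d) \<and>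
     (\<forall>g. non_peripheral_cut X g \<and> g \<notin> \<Gamma> \<longrightarrow> (\<exists>c\<in>\<Gamma>. cuts_cross g c)) \<and>
     (\<forall>g. non_peripheral_cut X g \<and> g \<notin> \<Gamma> \<longrightarrow> finite {c\<in>\<Gamma>. cuts_cross g c})"

end

theory Submission
  imports Defs
begin

lemma countable_clopens:
  assumes "compact_space X" "second_countable X"
  shows "countable {U. closedin X U \<and> openin X U}"
proof -
  obtain B where B: "countable B" "\<forall>V\<in>B. openin X V"
    "\<forall>U x. openin X U \<and> x \<in> U \<longrightarrow> (\<exists>V\<in>B. x \<in> V \<and> V \<subseteq> U)"
    using assms(2) unfolding second_countable_def by blast
  have "{U. closedin X U \<and> openin X U} \<subseteq> Union ` {F. finite F \<and> F \<subseteq> B}"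
  proof
    fix U assume U: "U \<in> {U. closedin X U \<and> openin X U}"
    then have c: "compactin X U" using closedin_compact_space assms(1) by blast
    have cov: "U \<subseteq> \<Union>{V\<in>B. V \<subseteq> U}" using B(3) U by blast
    have op: "\<forall>V\<in>{V\<in>B. V \<subseteq> U}. openin X V" using B(2) by blast
    obtain F where F: "finite F" "F \<subseteq> {V\<in>B. V \<subseteq> U}" "U \<subseteq> \<Union>F"
    proof -
      have "\<forall>\<U>. (\<forall>U \<in> \<U>. openin X U) \<and> U \<subseteq> \<Union>\<U>
          \<longrightarrow> (\<exists>\<F>. finite \<F> \<and> \<F> \<subseteq> \<U> \<and> U \<subseteq> \<Union>\<F>)"
        using c unfolding compactin_def by (elim conjE)
      then have "\<exists>\<F>. finite \<F> \<and> \<F> \<subseteq> {V\<in>B. V \<subseteq> U} \<and> U \<subseteq> \<Union>\<F>"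
        using cov op by (elim allE[of _ "{V\<in>B. V \<subseteq> U}"]) (simp only: simp_thms)
      then show ?thesis using that by blast
    qed
    then have "U = \<Union>F" by blast
    then show "U \<in> Union ` {F. finite F \<and> F \<subseteq> B}" using F by blast
  qed
  then show ?thesis
    by (rule countable_subset) (intro countable_image countable_Collect_finite_subset B(1))
qed

lemma cross_iff: "cuts_cross {A, B} {Q, R} \<longleftrightarrow> A\<inter>Q\<noteq>{} \<and> A\<inter>R\<noteq>{} \<and> B\<inter>Q\<noteq>{} \<and> B\<inter>R\<noteq>{}"
  by (auto simp: cuts_cross_def)

lemma cross_np:
  assumes "closedin X Q" "openin X Q" "A \<subseteq> topspace X"
    and "cuts_cross {A, topspace X - A} {Q, topspace X - Q}"
  shows "non_peripheral_cut X {Q, topspace X - Q}"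
proof -
  let ?E = "topspace X"
  from assms(4) have h: "A\<inter>Q\<noteq>{}" "A\<inter>(?E-Q)\<noteq>{}" "(?E-A)\<inter>Q\<noteq>{}" "(?E-A)\<inter>(?E-Q)\<noteq>{}"
    unfolding cross_iff by auto
  have Qs: "Q \<subseteq> ?E" using assms(2) openin_subset by blast
  have cut: "is_cut X {Q, ?E - Q}"
    unfolding is_cut_def
    apply (rule exI[of _ Q], rule exI[of _ "?E - Q"])
    using assms(1,2) Qs h by auto
  have p1: "\<exists>x\<in>Q. \<exists>y\<in>Q. x \<noteq> y"
  proof -
    obtain x where x: "x \<in> A \<inter> Q" using h(1) by blast
    obtain y where y: "y \<in> (?E-A) \<inter> Q" using h(3) by blast
    have "x \<noteq> y" using x y by auto
    then show ?thesis using x y by auto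
  qed
  have p2: "\<exists>x\<in>?E-Q. \<exists>y\<in>?E-Q. x \<noteq> y"
  proof -
    obtain x where x: "x \<in> A \<inter> (?E-Q)" using h(2) by blast
    obtain y where y: "y \<in> (?E-A) \<inter> (?E-Q)" using h(4) by blast
    have "x \<noteq> y" using x y by auto
    then show ?thesis using x y by auto
  qed
  show ?thesis unfolding non_peripheral_cut_def using cut p1 p2 by auto
qed

theorem mainTheorem5:
  fixes X :: "'a topology"
  assumes "stone_space X"
    and "second_countable X"
    and "\<exists>F. F \<subseteq> topspace X \<and> finite F \<and> card F \<ge> 4"
  shows "\<exists>\<Gamma>. pants_decomposition X \<Gamma>"
proof -
  let ?E = "topspace X"
  define CL where "CL = {U. closedin X U \<and> openin X U}"
  have cc: "countable CL" unfolding CL_def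
    using countable_clopens assms(1,2) stone_space_def by blast
  have ne: "CL \<noteq> {}" unfolding CL_def by auto
  define A where "A = from_nat_into CL"
  have rA: "range A = CL" unfolding A_def using cc ne by simp
  have Acl: "closedin X (A i) \<and> openin X (A i)" for i using rA CL_def by blast
  define T where "T s = {x \<in> ?E. \<forall>i<length s. (x \<in> A i) = (s!i)}" for s
  have T_sub: "T s \<subseteq> ?E" for s unfolding T_def by auto
  have T_nil: "T [] = ?E" unfolding T_def by auto
  have T_snoc: "T (s@[b]) = T s \<inter> (if b then A (length s) else ?E - A (length s))" for s b
    unfolding T_def by (auto simp: nth_append less_Suc_eq)
  have T_cl: "closedin X (T s) \<and> openin X (T s)" for s
  proof (induction s rule: rev_induct)
    case Nil then show ?case by (simp add: T_nil)
  next
    case (snoc b s)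
    then show ?case using Acl[of "length s"] by (auto simp: T_snoc)
  qed
  have T_lam: "T s \<subseteq> T t \<or> T t \<subseteq> T s \<or> T s \<inter> T t = {}" for s t
  proof (cases "\<forall>i<min (length s) (length t). s!i = t!i")
    case True
    show ?thesis
    proof (cases "length s \<le> length t")
      case True
      then have "T t \<subseteq> T s" using \<open>\<forall>i<_. _\<close> unfolding T_def by auto
      then show ?thesis by blast
    next
      case False
      then have "T s \<subseteq> T t" using \<open>\<forall>i<_. _\<close> unfolding T_def by auto
      then show ?thesis by blast
    qed
  next
    case False
    then obtain i where "i < length s" "i < length t" "s!i \<noteq> t!i" by auto
    then have "T s \<inter> T t = {}" unfolding T_def by auto
    then show ?thesis by blast
  qed
  have T_fin: "length s > k \<Longrightarrow> T s \<subseteq> A k \<or> T s \<inter> A k = {}" for s k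
    unfolding T_def by auto
  have T_ch: "T s = T (s@[True]) \<union> T (s@[False])" for s
    unfolding T_snoc using T_sub by auto
  define \<Gamma> where "\<Gamma> = {c. \<exists>s. c = {T s, ?E - T s} \<and> non_peripheral_cut X c}"
  have G_range: "\<Gamma> \<subseteq> range (\<lambda>s. {T s, ?E - T s})" unfolding \<Gamma>_def by auto
  have gdec: "\<exists>k. g = {A k, ?E - A k}" if "non_peripheral_cut X g" for g
  proof -
    from that obtain U V where UV: "g = {U, V}" "closedin X U" "openin X U" "U \<inter> V = {}"
      "U \<union> V = ?E" unfolding non_peripheral_cut_def is_cut_def by blast
    have "U \<in> CL" unfolding CL_def using UV by auto
    then obtain k where "U = A k" using rA by blast
    moreover have "V = ?E - U" using UV by blast
    ultimately show ?thesis using UV by blast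
  qed
  have nocross: "\<not> cuts_cross {A k, ?E - A k} {T s, ?E - T s}" if "length s > k" for s k
    using T_fin[OF that] T_sub[of s] unfolding cross_iff by blast
  have P1: "countable \<Gamma>"
    by (rule countable_subset[OF G_range]) (intro countable_image countableI_type)
  have P2: "\<forall>c\<in>\<Gamma>. non_peripheral_cut X c" unfolding \<Gamma>_def by auto
  have P3: "\<forall>c\<in>\<Gamma>. \<forall>d\<in>\<Gamma>. cuts_compatible c d"
  proof (intro ballI)
    fix c d assume "c \<in> \<Gamma>" "d \<in> \<Gamma>"
    then obtain s t where st: "c = {T s, ?E - T s}" "d = {T t, ?E - T t}" unfolding \<Gamma>_def by auto
    show "cuts_compatible c d"
      using T_lam[of s t] T_sub[of s] T_sub[of t] unfolding st cuts_compatible_def cross_iff by blast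
  qed
  have P5: "finite {c\<in>\<Gamma>. cuts_cross g c}" if gnp: "non_peripheral_cut X g" for g
  proof -
    obtain k where k: "g = {A k, ?E - A k}" using gdec[OF gnp] by blast
    have "{c\<in>\<Gamma>. cuts_cross g c} \<subseteq> (\<lambda>s. {T s, ?E - T s}) ` {s. set s \<subseteq> UNIV \<and> length s \<le> k}"
    proof
      fix c assume c: "c \<in> {c\<in>\<Gamma>. cuts_cross g c}"
      then obtain s where s: "c = {T s, ?E - T s}" unfolding \<Gamma>_def by auto
      have "length s \<le> k"
      proof (rule ccontr)
        assume "\<not> length s \<le> k"
        then have "k < length s" by simp
        then have "\<not> cuts_cross g c" using nocross[of k s] k s by simp
        then show False using c by simp
      qed
      then show "c \<in> (\<lambda>s. {T s, ?E - T s}) ` {s. set s \<subseteq> UNIV \<and> length s \<le> k}" using s by blast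
    qed
    moreover have "finite {s::bool list. set s \<subseteq> UNIV \<and> length s \<le> k}"
      by (rule finite_lists_length_le) simp
    ultimately show ?thesis using finite_subset by blast
  qed
  have P4: "\<exists>c\<in>\<Gamma>. cuts_cross g c" if gh: "non_peripheral_cut X g" "g \<notin> \<Gamma>" for g
  proof (rule ccontr)
    assume nc: "\<not> (\<exists>c\<in>\<Gamma>. cuts_cross g c)"
    obtain k where k: "g = {A k, ?E - A k}" using gdec[OF gh(1)] by blast
    have Aks: "A k \<subseteq> ?E" using Acl openin_subset by blast
    have ne1: "A k \<noteq> {}" and ne2: "?E - A k \<noteq> {}"
      using gh(1) unfolding k non_peripheral_cut_def by auto
    have ncr: "\<not> cuts_cross g {T s, ?E - T s}" for s
    proof
      assume cr: "cuts_cross g {T s, ?E - T s}"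
      then have "non_peripheral_cut X {T s, ?E - T s}"
        using cross_np[of X "T s" "A k"] T_cl Aks k by blast
      then have "{T s, ?E - T s} \<in> \<Gamma>" unfolding \<Gamma>_def by blast
      then show False using nc cr by blast
    qed
    have neq: "T s \<noteq> A k \<and> T s \<noteq> ?E - A k" for s
    proof
      show "T s \<noteq> A k"
      proof
        assume "T s = A k"
        then have "g = {T s, ?E - T s}" using k by simp
        then show False using gh unfolding \<Gamma>_def by blast
      qed
      show "T s \<noteq> ?E - A k"
      proof
        assume h: "T s = ?E - A k"
        then have "?E - T s = A k" using Aks by blast
        then have "g = {T s, ?E - T s}" using k h by auto
        then show False using gh unfolding \<Gamma>_def by blast
      qed
    qed
    define P where "P s \<longleftrightarrow> A k \<subseteq> T s \<or> ?E - A k \<subseteq> T s" for s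
    have P0: "P []" unfolding P_def T_nil by auto
    have Pb: "length s < Suc k" if "P s" for s
    proof (rule ccontr)
      assume "\<not> length s < Suc k"
      then have "length s > k" by simp
      from T_fin[OF this] have "T s \<subseteq> A k \<or> T s \<inter> A k = {}" .
      then show False using that neq[of s] T_sub[of s] ne1 ne2 unfolding P_def by blast
    qed
    have Pb': "\<forall>y. P y \<longrightarrow> length y < Suc k" using Pb by blast
    have "\<exists>x. P x \<and> (\<forall>y. P y \<longrightarrow> length y \<le> length x)"
      by (rule Lattices_Big.ex_has_greatest_nat[OF P0 Pb'])
    then obtain s where s: "P s" "\<forall>t. P t \<longrightarrow> length t \<le> length s"
      by blast
    have cc: "\<not> P (s@[b])" for b
    proof
      assume "P (s@[b])"
      then have "length (s@[b]) \<le> length s" using s(2) by blast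
      then show False by simp
    qed
    note c1 = cc[of True] and c2 = cc[of False]
    let ?T1 = "T (s@[True])" and ?T2 = "T (s@[False])" and ?B = "?E - A k"
    have d1: "\<not> A k \<subseteq> ?T1" "\<not> ?B \<subseteq> ?T1" using c1 unfolding P_def by auto
    have d2: "\<not> A k \<subseteq> ?T2" "\<not> ?B \<subseteq> ?T2" using c2 unfolding P_def by auto
    have n1: "?T1 \<subseteq> A k \<or> ?T1 \<subseteq> ?B"
    proof -
      have "\<not> cuts_cross {A k, ?B} {?T1, ?E - ?T1}" using ncr[of "s@[True]"] k by simp
      then have "A k \<inter> ?T1 = {} \<or> A k \<inter> (?E - ?T1) = {} \<or> ?B \<inter> ?T1 = {} \<or> ?B \<inter> (?E - ?T1) = {}"
        unfolding cross_iff by blast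
      then show ?thesis using d1 T_sub[of "s@[True]"] Aks by blast
    qed
    have n2: "?T2 \<subseteq> A k \<or> ?T2 \<subseteq> ?B"
    proof -
      have "\<not> cuts_cross {A k, ?B} {?T2, ?E - ?T2}" using ncr[of "s@[False]"] k by simp
      then have "A k \<inter> ?T2 = {} \<or> A k \<inter> (?E - ?T2) = {} \<or> ?B \<inter> ?T2 = {} \<or> ?B \<inter> (?E - ?T2) = {}"
        unfolding cross_iff by blast
      then show ?thesis using d2 T_sub[of "s@[False]"] Aks by blast
    qed
    have ts: "T s = ?T1 \<union> ?T2" by (rule T_ch)
    have ss: "A k \<subseteq> T s \<or> ?B \<subseteq> T s" using s(1) unfolding P_def .
    have nq: "T s \<noteq> A k" "T s \<noteq> ?B" using neq[of s] by auto
    show False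
    proof (cases "?T1 \<subseteq> A k")
      case a1: True
      show False
      proof (cases "?T2 \<subseteq> A k")
        case True
        then have "T s \<subseteq> A k" using a1 ts by blast
        then show False using ss nq ne2 by blast
      next
        case False
        then have "?T2 \<subseteq> ?B" using n2 by blast
        then show False using a1 ss ts d1 d2 by blast
      qed
    next
      case b1: False
      then have b1': "?T1 \<subseteq> ?B" using n1 by blast
      show False
      proof (cases "?T2 \<subseteq> A k")
        case True
        then show False using b1' ss ts d1 d2 by blast
      next
        case False
        then have "?T2 \<subseteq> ?B" using n2 by blast
        then have "T s \<subseteq> ?B" using b1' ts by blast
        then show False using ss nq ne1 by blast
      qed
    qed
  qed
  have "pants_decomposition X \<Gamma>"
    unfolding pants_decomposition_def
  proof (intro conjI allI impI)
    show "countable \<Gamma>" by (rule P1)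
    show "\<forall>c\<in>\<Gamma>. non_peripheral_cut X c" by (rule P2)
    show "\<forall>c\<in>\<Gamma>. \<forall>d\<in>\<Gamma>. cuts_compatible c d" by (rule P3)
    fix g assume "non_peripheral_cut X g \<and> g \<notin> \<Gamma>"
    then show "\<exists>c\<in>\<Gamma>. cuts_cross g c" using P4 by simp
  next
    fix g assume "non_peripheral_cut X g \<and> g \<notin> \<Gamma>"
    then show "finite {c \<in> \<Gamma>. cuts_cross g c}" using P5 by simp
  qed
  then show ?thesis by blast
qed

end
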